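(* Let $T>0$, $\beta=1/T$, let $I\ge 2$, let $E_1,\dots,E_I>0$, and let $p_1,\dots,p_I$ be integer multiples of $2\pi T$ (the external Euclidean energies entering the $I$ vertices of a one-loop graph with $I$ vertices and $I$ internal lines). Set $u_1=0$ and $u_j=\sum_{l=2}^{j}p_l$ for $j=2,\dots,I$. Define $$D(p,E,T)=\Big(\prod_{j=1}^I 2E_j\Big)\,T\sum_{n\in\mathbb{Z}}\ \prod_{j=1}^I\frac{1}{(2\pi T n+u_j)^2+E_j^2},$$ and, for real $E_1,\dots,E_I$, $$d_l(p,E)=\prod_{j\neq l}\ \sum_{\sigma_j=\pm1}\frac{\sigma_j}{i(u_j-u_l)-E_l-\sigma_jE_j}\quad(l=1,\dots,I),\qquad D_0(p,E)=(-1)^{I+1}\sum_{l=1}^I d_l(p,E).$$ Assume that $i(u_j-u_l)+\sigma E_l+\sigma' E_j\neq 0$ for all $j\neq l$ and all $\sigma,\sigma'\in\{\pm1\}$. Then: (i) for any two distinct indices $i\neq j$ in $\{1,\dots,I\}$, $(1+\mathcal{S}_i)(1+\mathcal{S}_j)D_0(p,E)=0$ (so $D_0$ is annihilated by $\prod_{i\in C}(1+\mathcal{S}_i)$ for every set $C$ of at least two lines, i.e. every set of lines whose removal disconnects the loop); (ii) $D(p,E,T)=\Big[1+\sum_{j=1}^I n(E_j)(1+\mathcal{S}_j)\Big]D_0(p,E)=\Big[\prod_{j=1}^I\big(1+n(E_j)(1+\mathcal{S}_j)\big)\Big]D_0(p,E)$.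
   Context: $n(E)=(e^{\beta E}-1)^{-1}$ is the Bose–Einstein factor. $\mathcal{S}_j$ is the reflection operator in the variable $E_j$: $(\mathcal{S}_jf)(E_1,\dots,E_j,\dots,E_I)=f(E_1,\dots,-E_j,\dots,E_I)$. The reflections act only on $D_0$, regarded as a function of independent real variables $E_1,\dots,E_I$ (with $p$ fixed); the factors $n(E_j)$ are multiplicative constants evaluated at the given positive $E_j$, and after applying the operators one evaluates at the given positive $E_j$. *)

theory Defs
  imports "HOL-Analysis.Analysis"
begin

text \<open>Indices of lines/vertices are 1..I; external energies p and internal energies E
  are given as functions on nat (only the values at 1..I matter).\<close>

definition bose :: "real \<Rightarrow> real \<Rightarrow> real" where
  "bose T x = 1 / (exp (x / T) - 1)"

definition uvar :: "(nat \<Rightarrow> real) \<Rightarrow> nat \<Rightarrow> real" where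
  "uvar p j = (\<Sum>l\<in>{2..j}. p l)"

definition Dsum :: "nat \<Rightarrow> (nat \<Rightarrow> real) \<Rightarrow> (nat \<Rightarrow> real) \<Rightarrow> real \<Rightarrow> real" where
  "Dsum I p E T =
     (\<Prod>j\<in>{1..I}. 2 * E j) * T *
     infsum (\<lambda>n::int. \<Prod>j\<in>{1..I}. 1 / ((2 * pi * T * of_int n + uvar p j)\<^sup>2 + (E j)\<^sup>2)) UNIV"

definition dterm :: "nat \<Rightarrow> (nat \<Rightarrow> real) \<Rightarrow> (nat \<Rightarrow> real) \<Rightarrow> nat \<Rightarrow> complex" where
  "dterm I p E l =
     (\<Prod>j\<in>{1..I} - {l}. \<Sum>\<sigma>\<in>{-1, 1::real}.
        complex_of_real \<sigma> /
          (\<i> * complex_of_real (uvar p j - uvar p l) - complex_of_real (E l) - complex_of_real (\<sigma> * E j)))"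

definition D0 :: "nat \<Rightarrow> (nat \<Rightarrow> real) \<Rightarrow> (nat \<Rightarrow> real) \<Rightarrow> complex" where
  "D0 I p E = (-1) ^ (I + 1) * (\<Sum>l\<in>{1..I}. dterm I p E l)"

definition refl :: "nat \<Rightarrow> ((nat \<Rightarrow> real) \<Rightarrow> complex) \<Rightarrow> ((nat \<Rightarrow> real) \<Rightarrow> complex)" where
  "refl j f = (\<lambda>E. f (E(j := - E j)))"

definition onePlusRefl :: "nat \<Rightarrow> ((nat \<Rightarrow> real) \<Rightarrow> complex) \<Rightarrow> ((nat \<Rightarrow> real) \<Rightarrow> complex)" where
  "onePlusRefl j f = (\<lambda>E. f E + refl j f E)"

text \<open>Product over a finite set C of the operators (1 + S_i) (they commute; the
  composition is taken in increasing index order).\<close>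
definition prodOnePlusRefl :: "nat set \<Rightarrow> ((nat \<Rightarrow> real) \<Rightarrow> complex) \<Rightarrow> ((nat \<Rightarrow> real) \<Rightarrow> complex)" where
  "prodOnePlusRefl C = foldr (\<lambda>i g. onePlusRefl i \<circ> g) (sorted_list_of_set C) id"

definition bfactor :: "complex \<Rightarrow> nat \<Rightarrow> ((nat \<Rightarrow> real) \<Rightarrow> complex) \<Rightarrow> ((nat \<Rightarrow> real) \<Rightarrow> complex)" where
  "bfactor c j f = (\<lambda>E. f E + c * onePlusRefl j f E)"

end

theory Submission
  imports Defs "HOL-Analysis.Analysis"
begin


definition oddin :: "nat \<Rightarrow> ((nat \<Rightarrow> real) \<Rightarrow> complex) \<Rightarrow> bool" where
  "oddin x f \<longleftrightarrow> (\<forall>E. f (E(x := - E x)) = - f E)"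

definition FO :: "nat list \<Rightarrow> ((nat \<Rightarrow> real) \<Rightarrow> complex) \<Rightarrow> ((nat \<Rightarrow> real) \<Rightarrow> complex)" where
  "FO xs = foldr (\<lambda>i g. onePlusRefl i \<circ> g) xs id"

lemma FO_Nil[simp]: "FO [] f = f" by (simp add: FO_def)
lemma FO_Cons[simp]: "FO (y # ys) f = onePlusRefl y (FO ys f)" by (simp add: FO_def)

lemma oddin_zero: "onePlusRefl x f = (\<lambda>_. 0)" if "oddin x f"
  using that by (auto simp: oddin_def onePlusRefl_def refl_def)

lemma oddin_opr: "oddin x (onePlusRefl y f)" if "oddin x f"
proof (cases "y = x")
  case True
  then have z: "onePlusRefl y f = (\<lambda>_. 0)" using oddin_zero[OF that] by simp
  show ?thesis unfolding oddin_def z by simp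
next
  case False
  show ?thesis unfolding oddin_def onePlusRefl_def refl_def
  proof
    fix E :: "nat \<Rightarrow> real"
    have h1: "f (E(x := - E x)) = - f E" using that by (simp add: oddin_def)
    have h2: "(E(x := - E x))(y := - (E(x := - E x)) y) = (E(y := - E y))(x := - (E(y := - E y)) x)"
      using False by (auto simp: fun_eq_iff)
    have h3: "f ((E(y := - E y))(x := - (E(y := - E y)) x)) = - f (E(y := - E y))"
      using that unfolding oddin_def by blast
    show "f (E(x := - E x)) + f ((E(x := - E x))(y := - (E(x := - E x)) y)) =
        - (f E + f (E(y := - E y)))" unfolding h1 h2 h3 by simp
  qed
qed

lemma oddin_FO: "oddin x f \<Longrightarrow> oddin x (FO xs f)"
  by (induction xs) (auto intro: oddin_opr)

lemma opr_zero: "onePlusRefl y (\<lambda>_. 0) = (\<lambda>_. 0)"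
  by (simp add: onePlusRefl_def refl_def)

lemma FO_kill: "oddin x f \<Longrightarrow> x \<in> set xs \<Longrightarrow> FO xs f = (\<lambda>_. 0)"
proof (induction xs)
  case Nil then show ?case by simp
next
  case (Cons y ys)
  show ?case
  proof (cases "x \<in> set ys")
    case True then show ?thesis using Cons by (simp add: opr_zero)
  next
    case False
    then have "x = y" using Cons by simp
    then show ?thesis using oddin_zero[OF oddin_FO[OF Cons.prems(1)]] by simp
  qed
qed

lemma FO_lin: "FO xs (\<lambda>E. c * (\<Sum>l\<in>L. g l E)) = (\<lambda>E. c * (\<Sum>l\<in>L. FO xs (g l) E))"
proof (induction xs)
  case Nil then show ?case by simp
next
  case (Cons y ys)
  show ?case by (simp add: Cons onePlusRefl_def refl_def sum.distrib distrib_left)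
qed

lemma dterm_odd:
  assumes "x \<in> {1..I}" "x \<noteq> l"
  shows "oddin x (\<lambda>E. dterm I p E l)"
  unfolding oddin_def
proof
  fix E :: "nat \<Rightarrow> real"
  let ?E = "E(x := - E x)"
  let ?f = "\<lambda>E j. \<Sum>\<sigma>\<in>{-1, 1::real}.
        complex_of_real \<sigma> /
          (\<i> * complex_of_real (uvar p j - uvar p l) - complex_of_real (E l) - complex_of_real (\<sigma> * E j))"
  have x: "x \<in> {1..I} - {l}" using assms by auto
  have eq: "dterm I p E' l = ?f E' x * (\<Prod>j\<in>{1..I} - {l} - {x}. ?f E' j)" for E'
    unfolding dterm_def by (rule prod.remove[OF _ x]) simp
  have h1: "(\<Prod>j\<in>{1..I} - {l} - {x}. ?f ?E j) = (\<Prod>j\<in>{1..I} - {l} - {x}. ?f E j)"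
    using assms by (intro prod.cong) auto
  have h2: "?f ?E x = - ?f E x" using assms by (simp add: algebra_simps)
  show "dterm I p ?E l = - dterm I p E l"
    unfolding eq[of ?E] eq[of E] by (simp only: h1 h2 mult_minus_left)
qed

lemma D0_eq: "D0 I p = (\<lambda>E. (-1) ^ (I + 1) * (\<Sum>l\<in>{1..I}. dterm I p E l))"
  by (simp add: D0_def fun_eq_iff)

lemma FO_D0_zero:
  assumes "\<And>l. l \<in> {1..I} \<Longrightarrow> \<exists>x\<in>set xs. x \<in> {1..I} \<and> x \<noteq> l"
  shows "FO xs (D0 I p) = (\<lambda>_. 0)"
proof -
  have "FO xs (D0 I p) = (\<lambda>E. (-1) ^ (I + 1) * (\<Sum>l\<in>{1..I}. FO xs (\<lambda>E. dterm I p E l) E))"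
    unfolding D0_eq by (rule FO_lin)
  also have "\<dots> = (\<lambda>_. 0)"
  proof (rule ext)
    fix E
    have "FO xs (\<lambda>E. dterm I p E l) E = 0" if lI: "l \<in> {1..I}" for l
    proof -
      obtain x where "x \<in> set xs" "x \<in> {1..I}" "x \<noteq> l" using assms[OF lI] by blast
      then show ?thesis using FO_kill[OF dterm_odd] by metis
    qed
    then show "(-1) ^ (I + 1) * (\<Sum>l\<in>{1..I}. FO xs (\<lambda>E. dterm I p E l) E) = 0" by simp
  qed
  finally show ?thesis .
qed

lemma part_pair:
  assumes "i \<in> {1..I}" "j \<in> {1..I}" "i \<noteq> j"
  shows "onePlusRefl i (onePlusRefl j (D0 I p)) = (\<lambda>_. 0)"
proof -
  have "FO [i, j] (D0 I p) = (\<lambda>_. 0)"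
    by (rule FO_D0_zero) (use assms in auto)
  then show ?thesis by simp
qed

lemma part_C:
  assumes "C \<subseteq> {1..I}" "card C \<ge> 2"
  shows "prodOnePlusRefl C (D0 I p) = (\<lambda>_. 0)"
proof -
  have fin: "finite C" using assms(1) finite_subset by blast
  have "FO (sorted_list_of_set C) (D0 I p) = (\<lambda>_. 0)"
  proof (rule FO_D0_zero)
    fix l assume "l \<in> {1..I}"
    have "\<exists>x\<in>C. x \<noteq> l"
    proof (rule ccontr)
      assume "\<not> ?thesis"
      then have "C \<subseteq> {l}" by auto
      then have "card C \<le> 1" using card_mono[of "{l}" C] by simp
      then show False using assms by simp
    qed
    then obtain x where "x \<in> C" "x \<noteq> l" by blast
    then show "\<exists>x\<in>set (sorted_list_of_set C). x \<in> {1..I} \<and> x \<noteq> l"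
      using fin assms(1) by (intro bexI[of _ x]) auto
  qed
  then show ?thesis by (simp add: prodOnePlusRefl_def FO_def)
qed


lemma pf2: fixes x a k c :: complex
  assumes "a \<noteq> k" "x \<noteq> a" "x \<noteq> k"
  shows "1 / (x - a) * (c / (x - k)) = c / (a - k) / (x - a) + c / (k - a) / (x - k)"
proof -
  have n: "a - k \<noteq> 0" "x - a \<noteq> 0" "x - k \<noteq> 0" using assms by auto
  have "c / (k - a) / (x - k) = - (c / (a - k) / (x - k))"
    by (metis minus_diff_eq divide_minus_right minus_divide_left)
  then have "c / (a - k) / (x - a) + c / (k - a) / (x - k) = c / (a - k) * (1 / (x - a) - 1 / (x - k))"
    by (simp add: algebra_simps)
  also have "1 / (x - a) - 1 / (x - k) = (a - k) / ((x - a) * (x - k))"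
    using n by (simp add: divide_simps)
  also have "c / (a - k) * ((a - k) / ((x - a) * (x - k))) = c / ((x - a) * (x - k))"
    using n by simp
  finally show ?thesis by simp
qed

definition pfc :: "('k \<Rightarrow> complex) \<Rightarrow> 'k set \<Rightarrow> 'k \<Rightarrow> complex" where
  "pfc b K k = (\<Prod>k'\<in>K - {k}. 1 / (b k - b k'))"

lemma pf_decomp:
  assumes "finite K" "K \<noteq> {}" "inj_on b K" "x \<notin> b ` K"
  shows "(\<Prod>k\<in>K. 1 / (x - b k)) = (\<Sum>k\<in>K. pfc b K k / (x - b k))"
  using assms
proof (induction K arbitrary: x rule: finite_ne_induct)
  case (singleton a)
  then show ?case by (simp add: pfc_def)
next
  case (insert a K)
  have inj: "inj_on b K" using insert.prems by (auto simp: inj_on_def)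
  have xa: "x \<noteq> b a" using insert.prems by auto
  have xk: "x \<noteq> b k" if "k \<in> K" for k using insert.prems that by auto
  have ak: "b a \<noteq> b k" if "k \<in> K" for k
    using inj_onD[OF insert.prems(1), of a k] insert.hyps that by auto
  have ba: "b a \<notin> b ` K" using ak by auto
  have pa: "pfc b (insert a K) a = (\<Sum>k\<in>K. pfc b K k / (b a - b k))"
  proof -
    have "pfc b (insert a K) a = (\<Prod>k\<in>K. 1 / (b a - b k))"
      unfolding pfc_def using insert.hyps by (intro prod.cong) auto
    also have "\<dots> = (\<Sum>k\<in>K. pfc b K k / (b a - b k))"
      by (rule insert.IH[OF inj ba])
    finally show ?thesis .
  qed
  have pk: "pfc b (insert a K) k = pfc b K k / (b k - b a)" if "k \<in> K" for k
  proof -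
    have "insert a K - {k} = insert a (K - {k})" using that insert.hyps by auto
    then have "pfc b (insert a K) k = 1 / (b k - b a) * pfc b K k"
      unfolding pfc_def using insert.hyps by simp
    then show ?thesis by simp
  qed
  have "(\<Prod>k\<in>insert a K. 1 / (x - b k)) = 1 / (x - b a) * (\<Sum>k\<in>K. pfc b K k / (x - b k))"
    using insert.hyps insert.IH[OF inj] insert.prems by simp
  also have "\<dots> = (\<Sum>k\<in>K. pfc b K k / (b a - b k)) / (x - b a)
                 + (\<Sum>k\<in>K. pfc b K k / (b k - b a) / (x - b k))"
  proof -
    have "1 / (x - b a) * (pfc b K k / (x - b k)) =
          pfc b K k / (b a - b k) / (x - b a) + pfc b K k / (b k - b a) / (x - b k)" if "k \<in> K" for k
    proof -
      show ?thesis using xa xk[OF that] ak[OF that] by (intro pf2) auto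
    qed
    then show ?thesis
      by (simp add: sum_distrib_left sum_divide_distrib sum.distrib)
  qed
  also have "\<dots> = (\<Sum>k\<in>insert a K. pfc b (insert a K) k / (x - b k))"
    using insert.hyps by (simp add: pa pk)
  finally show ?case .
qed

lemma pf_sumzero:
  assumes "finite K" "card K \<ge> 2" "inj_on b K"
  shows "(\<Sum>k\<in>K. pfc b K k) = 0"
proof -
  obtain a where a: "a \<in> K" using assms(2) by fastforce
  define K' where "K' = K - {a}"
  have K: "K = insert a K'" "a \<notin> K'" using a by (auto simp: K'_def)
  have fin: "finite K'" using assms(1) by (simp add: K'_def)
  have ne: "K' \<noteq> {}"
  proof
    assume "K' = {}"
    then have "K \<subseteq> {a}" by (auto simp: K'_def)
    then have "card K \<le> 1" using card_mono[of "{a}" K] by simp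
    then show False using assms(2) by simp
  qed
  have inj: "inj_on b K'" using assms(3) by (auto simp: K'_def inj_on_def)
  have ak: "b a \<noteq> b k" if "k \<in> K'" for k
    using inj_onD[OF assms(3), of a k] K that by auto
  have ba: "b a \<notin> b ` K'" using ak by auto
  have pa: "pfc b K a = (\<Sum>k\<in>K'. pfc b K' k / (b a - b k))"
  proof -
    have "pfc b K a = (\<Prod>k\<in>K'. 1 / (b a - b k))"
      unfolding pfc_def K'_def by simp
    also have "\<dots> = (\<Sum>k\<in>K'. pfc b K' k / (b a - b k))"
      by (rule pf_decomp[OF fin ne inj ba])
    finally show ?thesis .
  qed
  have pk: "pfc b K k = pfc b K' k / (b k - b a)" if "k \<in> K'" for k
  proof -
    have "K - {k} = insert a (K' - {k})" using that K by auto
    then have "pfc b K k = 1 / (b k - b a) * pfc b K' k"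
      unfolding pfc_def using K fin by simp
    then show ?thesis by simp
  qed
  have "(\<Sum>k\<in>K. pfc b K k) = pfc b K a + (\<Sum>k\<in>K'. pfc b K k)"
    using K fin by simp
  also have "\<dots> = (\<Sum>k\<in>K'. pfc b K' k / (b a - b k) + pfc b K' k / (b k - b a))"
    by (simp add: pa pk sum.distrib)
  also have "\<dots> = 0"
  proof (rule sum.neutral, rule ballI)
    fix k assume "k \<in> K'"
    have "pfc b K' k / (b a - b k) = - (pfc b K' k / (b k - b a))"
      by (metis minus_diff_eq divide_minus_right)
    then show "pfc b K' k / (b a - b k) + pfc b K' k / (b k - b a) = 0" by simp
  qed
  finally show ?thesis .
qed


lemma digamma_reflect:
  fixes z :: complex
  assumes z: "z \<notin> \<int>"
  shows "Digamma (1 - z) - Digamma z = of_real pi * cot (of_real pi * z)"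
proof -
  have z1: "z \<notin> \<int>\<^sub>\<le>\<^sub>0" using z nonpos_Ints_subset_Ints by blast
  have z2: "1 - z \<notin> \<int>\<^sub>\<le>\<^sub>0"
  proof
    assume "1 - z \<in> \<int>\<^sub>\<le>\<^sub>0"
    then have "1 - z \<in> \<int>" using nonpos_Ints_subset_Ints by blast
    then have "1 - (1 - z) \<in> \<int>" by (intro Ints_diff) auto
    then show False using z by simp
  qed
  have d1: "(rGamma has_field_derivative -rGamma z * Digamma z) (at z)"
    by (rule has_field_derivative_rGamma_no_nonpos_int[OF z1])
  have d2: "(rGamma has_field_derivative -rGamma (1 - z) * Digamma (1 - z)) (at (1 - z))"
    by (rule has_field_derivative_rGamma_no_nonpos_int[OF z2])
  have d3: "((\<lambda>w. 1 - w) has_field_derivative -1) (at z)"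
    by (auto intro!: derivative_eq_intros)
  have d4: "((\<lambda>w. rGamma (1 - w)) has_field_derivative
              (-rGamma (1 - z) * Digamma (1 - z)) * (-1)) (at z)"
    using DERIV_chain2[OF d2 d3] by simp
  have dL: "((\<lambda>w. rGamma w * rGamma (1 - w)) has_field_derivative
      rGamma z * rGamma (1 - z) * (Digamma (1 - z) - Digamma z)) (at z)"
    using DERIV_mult[OF d1 d4] by (simp add: algebra_simps)
  have dR: "((\<lambda>w. sin (of_real pi * w) / of_real pi) has_field_derivative
      cos (of_real pi * z) * of_real pi / of_real pi) (at z)"
    by (auto intro!: derivative_eq_intros)
  have feq: "(\<lambda>w::complex. rGamma w * rGamma (1 - w)) = (\<lambda>w. sin (of_real pi * w) / of_real pi)"
    by (rule ext) (rule rGamma_reflection_complex)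
  have "rGamma z * rGamma (1 - z) * (Digamma (1 - z) - Digamma z)
        = cos (of_real pi * z) * of_real pi / of_real pi"
    using DERIV_unique[OF dL dR[folded feq]] .
  then have "rGamma z * rGamma (1 - z) * (Digamma (1 - z) - Digamma z) = cos (of_real pi * z)"
    by simp
  then have eq: "sin (of_real pi * z) / of_real pi * (Digamma (1 - z) - Digamma z) = cos (of_real pi * z)"
    by (simp add: rGamma_reflection_complex)
  have sn: "sin (of_real pi * z) \<noteq> 0"
  proof
    assume "sin (of_real pi * z) = 0"
    then obtain n :: int where "of_real pi * z = of_real (of_int n * pi)" by (auto simp: sin_eq_0)
    then have "z = of_int n" by (simp add: field_simps)
    then show False using z by simp
  qed
  from eq sn show ?thesis by (simp add: cot_def field_simps)
qed

lemma digamma_diff_sums: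
  fixes z :: complex
  assumes z: "z \<notin> \<int>"
  shows "(\<lambda>k. inverse (z + of_nat k) - inverse (1 - z + of_nat k)) sums (Digamma (1 - z) - Digamma z)"
proof -
  have z0: "z \<noteq> 0" using z by auto
  have z1: "1 - z \<noteq> 0" using z by auto
  have s1: "(\<lambda>k. inverse (of_nat (Suc k)) - inverse (1 - z + of_nat k)) sums (Digamma (1 - z) + euler_mascheroni)"
    using summable_Digamma[OF z1] by (simp add: Digamma_def summable_sums)
  have s2: "(\<lambda>k. inverse (of_nat (Suc k)) - inverse (z + of_nat k)) sums (Digamma z + euler_mascheroni)"
    using summable_Digamma[OF z0] by (simp add: Digamma_def summable_sums)
  from sums_diff[OF s1 s2] show ?thesis by simp
qed

lemma partial_sym:
  fixes z :: complex
  shows "(\<Sum>k<M. inverse (z + of_nat k) - inverse (1 - z + of_nat k)) =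
         (\<Sum>n\<in>{- int M..<int M}. inverse (z + of_int n))"
proof (induction M)
  case 0 then show ?case by simp
next
  case (Suc M)
  have set: "{- int (Suc M)..<int (Suc M)} = insert (- int M - 1) (insert (int M) {- int M..<int M})"
    by auto
  have "inverse (z + of_int (- int M - 1)) = - inverse (1 - z + of_nat M)"
  proof -
    have "z + of_int (- int M - 1) = - (1 - z + of_nat M)" by simp
    then show ?thesis by (metis inverse_minus_eq)
  qed
  then show ?case unfolding set using Suc by simp
qed

lemma cot_lim:
  fixes z :: complex
  assumes z: "z \<notin> \<int>"
  shows "(\<lambda>M. \<Sum>n\<in>{- int M..<int M}. 1 / (z + of_int n)) \<longlonglongrightarrow> of_real pi * cot (of_real pi * z)"
proof -
  have "(\<lambda>M. \<Sum>k<M. inverse (z + of_nat k) - inverse (1 - z + of_nat k)) \<longlonglongrightarrow> (Digamma (1 - z) - Digamma z)"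
    using digamma_diff_sums[OF z] by (simp add: sums_def)
  then show ?thesis using digamma_reflect[OF z] partial_sym by (simp add: inverse_eq_divide)
qed

lemma cot_exp:
  fixes w :: complex
  assumes "sin w \<noteq> 0"
  shows "cot w = \<i> * (exp (2 * \<i> * w) + 1) / (exp (2 * \<i> * w) - 1)"
proof -
  define e where "e = exp (\<i> * w)"
  have e0: "e \<noteq> 0" by (simp add: e_def)
  have em: "exp (-(\<i> * w)) = 1 / e" by (simp add: e_def exp_minus inverse_eq_divide)
  have "2 * \<i> * w = \<i> * w + \<i> * w" by simp
  then have e2: "exp (2 * \<i> * w) = e * e" by (simp only: e_def exp_add)
  have s: "sin w = (e - 1 / e) / (2 * \<i>)" by (simp add: sin_exp_eq em e_def)
  have c: "cos w = (e + 1 / e) / 2" by (simp add: cos_exp_eq em e_def)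
  have "e - 1 / e \<noteq> 0" using assms s by auto
  then have ne: "e * e - 1 \<noteq> 0" using e0 by (simp add: field_simps)
  show ?thesis unfolding cot_def s c e2 using e0 ne
    by (simp add: field_simps)
qed


lemma filterlim_symint:
  "filterlim (\<lambda>M::nat. {- int M..<int M}) (finite_subsets_at_top (UNIV :: int set)) sequentially"
  unfolding filterlim_finite_subsets_at_top
proof (intro allI impI)
  fix X :: "int set" assume "finite X \<and> X \<subseteq> UNIV"
  then have "finite ((\<lambda>x. nat \<bar>x\<bar>) ` X)" by simp
  then obtain m where m: "\<forall>n\<in>(\<lambda>x. nat \<bar>x\<bar>) ` X. n < m" using finite_nat_set_iff_bounded by blast
  show "\<forall>\<^sub>F M in sequentially. finite {- int M..<int M} \<and> X \<subseteq> {- int M..<int M} \<and> {- int M..<int M} \<subseteq> UNIV"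
    using eventually_ge_at_top[of m]
  proof eventually_elim
    case (elim M)
    have "X \<subseteq> {- int M..<int M}"
    proof
      fix x assume "x \<in> X"
      then have "nat \<bar>x\<bar> < m" using m by auto
      then show "x \<in> {- int M..<int M}" using elim by auto
    qed
    then show ?case by simp
  qed
qed

lemma infsum_symlim:
  fixes h :: "int \<Rightarrow> real"
  assumes "h summable_on UNIV"
  shows "(\<lambda>M. \<Sum>n\<in>{- int M..<int M}. h n) \<longlonglongrightarrow> infsum h UNIV"
proof -
  have "(sum h \<longlongrightarrow> infsum h UNIV) (finite_subsets_at_top UNIV)"
    using assms has_sum_infsum unfolding has_sum_def by blast
  from filterlim_compose[OF this filterlim_symint] show ?thesis .
qed

lemma summable_int_even:
  fixes g :: "int \<Rightarrow> real"
  assumes "\<And>n. g (- n) = g n" "\<And>n. g n \<ge> 0" "summable (\<lambda>n::nat. g (int n))"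
  shows "g summable_on UNIV"
proof -
  have s0: "(\<lambda>n::nat. g (int n)) summable_on UNIV"
    using assms(2,3) by (intro norm_summable_imp_summable_on) simp
  have s1: "g summable_on (range int)"
    using s0 by (subst summable_on_reindex) (auto simp: o_def)
  have s2: "g summable_on (range (\<lambda>n::nat. - int n))"
    using s0 assms(1) by (subst summable_on_reindex) (auto simp: o_def inj_on_def)
  have "UNIV = range int \<union> range (\<lambda>n::nat. - int n)"
  proof -
    have "x \<in> range int \<union> range (\<lambda>n::nat. - int n)" for x :: int
    proof (cases "x \<ge> 0")
      case True then show ?thesis by (auto intro: image_eqI[of _ _ "nat x"])
    next
      case False then show ?thesis by (auto intro!: image_eqI[of _ _ "nat (- x)"])
    qed
    then show ?thesis by auto
  qed
  then show ?thesis using summable_on_union[OF s1 s2] by simp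
qed

lemma summable_lorentz:
  fixes a c :: real
  assumes "a > 0"
  shows "(\<lambda>n::int. 1 / ((a * of_int n)\<^sup>2 + c\<^sup>2)) summable_on UNIV"
proof (rule summable_int_even)
  show "summable (\<lambda>n::nat. 1 / ((a * of_int (int n))\<^sup>2 + c\<^sup>2))"
  proof (rule summable_comparison_test')
    show "summable (\<lambda>n::nat. inverse (a\<^sup>2) * inverse (of_nat n ^ 2 :: real))"
      by (intro summable_mult inverse_power_summable) simp
    fix n :: nat assume "n \<ge> 1"
    then have pos: "(a * real n)\<^sup>2 > 0" using assms by simp
    have "1 / ((a * real n)\<^sup>2 + c\<^sup>2) \<le> 1 / (a * real n)\<^sup>2"
      using pos by (intro divide_left_mono) (auto intro!: mult_pos_pos add_pos_nonneg)
    also have "\<dots> = inverse (a\<^sup>2) * inverse (of_nat n ^ 2)"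
      by (simp add: power_mult_distrib field_simps)
    finally show "norm (1 / ((a * of_int (int n))\<^sup>2 + c\<^sup>2)) \<le> inverse (a\<^sup>2) * inverse (of_nat n ^ 2 :: real)"
      by simp
  qed
qed (simp_all add: power2_eq_square)


definition bb :: "(nat \<Rightarrow> real) \<Rightarrow> (nat \<Rightarrow> real) \<Rightarrow> nat \<times> real \<Rightarrow> complex" where
  "bb p E k = - \<i> * of_real (uvar p (fst k)) + of_real (snd k * E (fst k))"

definition KK :: "nat \<Rightarrow> (nat \<times> real) set" where
  "KK I = {1..I} \<times> {-1, 1}"

definition hh :: "real \<Rightarrow> nat \<Rightarrow> (nat \<Rightarrow> real) \<Rightarrow> (nat \<Rightarrow> real) \<Rightarrow> int \<Rightarrow> real" where
  "hh T I p E n = (\<Prod>j\<in>{1..I}. 1 / ((2 * pi * T * of_int n + uvar p j)\<^sup>2 + (E j)\<^sup>2))"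

definition xn :: "real \<Rightarrow> int \<Rightarrow> complex" where
  "xn T n = \<i> * of_real (2 * pi * T * of_int n)"

lemma prod_neg: "(\<Prod>j\<in>A. - f j) = (-1) ^ card A * (\<Prod>j\<in>A. f j :: 'a :: comm_ring_1)"
proof -
  have "(\<Prod>j\<in>A. - f j) = (\<Prod>j\<in>A. (-1) * f j)" by simp
  also have "\<dots> = (\<Prod>j\<in>A. (-1::'a)) * (\<Prod>j\<in>A. f j)" by (rule prod.distrib)
  finally show ?thesis by simp
qed

context
  fixes T :: real and I :: nat and E p :: "nat \<Rightarrow> real"
  assumes T_pos: "T > 0"
    and E_pos: "\<forall>j\<in>{1..I}. E j > 0"
    and p_mats: "\<forall>j\<in>{1..I}. \<exists>k::int. p j = 2 * pi * T * of_int k"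
    and nondeg: "\<forall>j\<in>{1..I}. \<forall>l\<in>{1..I}. \<forall>\<sigma>\<in>{-1, 1::real}. \<forall>\<sigma>'\<in>{-1, 1::real}.
                   j \<noteq> l \<longrightarrow>
                   \<i> * complex_of_real (uvar p j - uvar p l) + complex_of_real (\<sigma> * E l)
                     + complex_of_real (\<sigma>' * E j) \<noteq> 0"
begin

lemma uvar_int:
  assumes "j \<le> I"
  shows "\<exists>m::int. uvar p j = 2 * pi * T * of_int m"
proof -
  obtain k :: "nat \<Rightarrow> int" where k: "\<forall>j\<in>{1..I}. p j = 2 * pi * T * of_int (k j)"
    using p_mats by metis
  have "uvar p j = (\<Sum>l\<in>{2..j}. 2 * pi * T * of_int (k l))"
    unfolding uvar_def using assms k by (intro sum.cong) auto
  also have "\<dots> = 2 * pi * T * of_int (\<Sum>l\<in>{2..j}. k l)"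
    by (simp add: sum_distrib_left)
  finally show ?thesis by blast
qed

lemma nd:
  assumes "j \<in> {1..I}" "l \<in> {1..I}" "\<sigma> \<in> {-1, 1::real}" "\<sigma>' \<in> {-1, 1::real}" "j \<noteq> l"
  shows "\<i> * complex_of_real (uvar p j - uvar p l) + complex_of_real (\<sigma> * E l)
                     + complex_of_real (\<sigma>' * E j) \<noteq> 0"
  by (rule nondeg[rule_format, OF assms])

lemma bb_inj: "inj_on (bb p E) (KK I)"
proof (rule inj_onI)
  fix k k' assume k: "k \<in> KK I" and k': "k' \<in> KK I" and eq: "bb p E k = bb p E k'"
  obtain j s where js: "k = (j, s)" "j \<in> {1..I}" "s \<in> {-1, 1}" using k by (auto simp: KK_def)
  obtain l t where lt: "k' = (l, t)" "l \<in> {1..I}" "t \<in> {-1, 1}" using k' by (auto simp: KK_def)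
  show "k = k'"
  proof (cases "j = l")
    case True
    then have "of_real (s * E j) = (of_real (t * E j) :: complex)"
      using eq js lt by (simp add: bb_def)
    then have "s * E j = t * E j" using of_real_eq_iff by blast
    moreover have "E j > 0" using E_pos js(2) by blast
    then have "E j \<noteq> 0" by simp
    ultimately have "s = t" by simp
    then show ?thesis using js lt True by simp
  next
    case False
    have "\<i> * complex_of_real (uvar p j - uvar p l) + complex_of_real (t * E l)
           + complex_of_real ((- s) * E j) = - (bb p E k - bb p E k')"
      using js lt by (simp add: bb_def algebra_simps)
    also have "\<dots> = 0" using eq by simp
    moreover have ms: "- s \<in> {-1, 1::real}" using js(3) by auto
    moreover have "\<i> * complex_of_real (uvar p j - uvar p l) + complex_of_real (t * E l)
           + complex_of_real ((- s) * E j) \<noteq> 0"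
      by (rule nd[OF js(2) lt(2,3) ms False])
    ultimately show ?thesis by simp
  qed
qed

lemma xn_notin: "xn T n \<notin> bb p E ` KK I"
proof
  assume "xn T n \<in> bb p E ` KK I"
  then obtain k where k: "k \<in> KK I" "xn T n = bb p E k" by blast
  have j: "fst k \<in> {1..I}" "snd k \<in> {-1, 1}" using k by (auto simp: KK_def)
  have "Re (xn T n) = Re (bb p E k)" using k by simp
  then have "snd k * E (fst k) = 0" by (simp add: xn_def bb_def)
  moreover have "E (fst k) > 0" using E_pos j by auto
  ultimately show False using j by auto
qed

lemma hh_pf: "complex_of_real (hh T I p E n) = (-1) ^ I * (\<Prod>k\<in>KK I. 1 / (xn T n - bb p E k))"
proof -
  have fac: "complex_of_real (1 / ((2 * pi * T * of_int n + uvar p j)\<^sup>2 + (E j)\<^sup>2)) =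
        - (\<Prod>t\<in>{-1, 1::real}. 1 / (xn T n - bb p E (j, t)))" if j: "j \<in> {1..I}" for j
  proof -
    define w where "w = 2 * pi * T * of_int n + uvar p j"
    have "E j > 0" using E_pos j by auto
    then have pos: "w\<^sup>2 + (E j)\<^sup>2 > 0" by (intro add_nonneg_pos) auto
    have "(xn T n - bb p E (j, -1)) * (xn T n - bb p E (j, 1)) = - complex_of_real (w\<^sup>2 + (E j)\<^sup>2)"
      by (simp add: xn_def bb_def w_def algebra_simps power2_eq_square)
    moreover have "(\<Prod>t\<in>{-1, 1::real}. 1 / (xn T n - bb p E (j, t))) =
        1 / ((xn T n - bb p E (j, -1)) * (xn T n - bb p E (j, 1)))" by simp
    ultimately have "- (\<Prod>t\<in>{-1, 1::real}. 1 / (xn T n - bb p E (j, t))) = 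
        - (1 / (- complex_of_real (w\<^sup>2 + (E j)\<^sup>2)))" by simp
    also have "\<dots> = complex_of_real (1 / (w\<^sup>2 + (E j)\<^sup>2))"
      by (simp only: divide_minus_right minus_minus of_real_divide of_real_1)
    finally show ?thesis by (simp add: w_def)
  qed
  have "complex_of_real (hh T I p E n) = (\<Prod>j\<in>{1..I}. - (\<Prod>t\<in>{-1, 1::real}. 1 / (xn T n - bb p E (j, t))))"
    unfolding hh_def of_real_prod using fac by (intro prod.cong) auto
  also have "\<dots> = (-1) ^ I * (\<Prod>j\<in>{1..I}. \<Prod>t\<in>{-1, 1::real}. 1 / (xn T n - bb p E (j, t)))"
    by (simp add: prod_neg)
  also have "(\<Prod>j\<in>{1..I}. \<Prod>t\<in>{-1, 1::real}. 1 / (xn T n - bb p E (j, t))) = (\<Prod>k\<in>KK I. 1 / (xn T n - bb p E k))"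
    unfolding KK_def prod.cartesian_product by (simp add: case_prod_beta)
  finally show ?thesis .
qed

end


lemma D0_pair:
  assumes j: "j \<in> {1..I}"
  shows "D0 I p E + D0 I p (E(j := - E j)) = (-1) ^ (I + 1) * (dterm I p E j + dterm I p (E(j := - E j)) j)"
proof -
  have odd: "dterm I p (E(j := - E j)) l = - dterm I p E l" if "l \<in> {1..I} - {j}" for l
    using dterm_odd[of j I l p] j that unfolding oddin_def by auto
  have "(\<Sum>l\<in>{1..I}. dterm I p (E(j := - E j)) l) = dterm I p (E(j := - E j)) j + (\<Sum>l\<in>{1..I} - {j}. dterm I p (E(j := - E j)) l)"
    using j by (subst sum.remove[of _ j]) auto
  also have "(\<Sum>l\<in>{1..I} - {j}. dterm I p (E(j := - E j)) l) = - (\<Sum>l\<in>{1..I} - {j}. dterm I p E l)"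
    using odd by (simp add: sum_negf)
  finally have s1: "(\<Sum>l\<in>{1..I}. dterm I p (E(j := - E j)) l) = dterm I p (E(j := - E j)) j + - (\<Sum>l\<in>{1..I} - {j}. dterm I p E l)" .
  have s2: "(\<Sum>l\<in>{1..I}. dterm I p E l) = dterm I p E j + (\<Sum>l\<in>{1..I} - {j}. dterm I p E l)"
    using j by (subst sum.remove[of _ j]) auto
  show ?thesis unfolding D0_def s1 s2 by (simp add: algebra_simps)
qed

lemma final_alg:
  fixes a b n :: "nat \<Rightarrow> complex"
  assumes "(\<Sum>j\<in>J. a j + b j) = 0"
  shows "(\<Sum>j\<in>J. (1/2 + n j) * (a j - b j)) = (\<Sum>j\<in>J. a j) + (\<Sum>j\<in>J. n j * (a j - b j))"
proof -
  have "(\<Sum>j\<in>J. (1/2 + n j) * (a j - b j)) = (\<Sum>j\<in>J. (a j - (a j + b j) / 2) + n j * (a j - b j))"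
    by (intro sum.cong) (simp_all add: field_simps)
  also have "\<dots> = (\<Sum>j\<in>J. a j - (a j + b j) / 2) + (\<Sum>j\<in>J. n j * (a j - b j))"
    by (rule sum.distrib)
  also have "(\<Sum>j\<in>J. a j - (a j + b j) / 2) = (\<Sum>j\<in>J. a j) - (\<Sum>j\<in>J. (a j + b j) / 2)"
    by (rule sum_subtractf)
  also have "(\<Sum>j\<in>J. (a j + b j) / 2) = (\<Sum>j\<in>J. a j + b j) / 2"
    by (rule sum_divide_distrib[symmetric])
  finally show ?thesis using assms by simp
qed

lemma sum_KK: "(\<Sum>k\<in>KK I. f k) = (\<Sum>j\<in>{1..I}. f (j, -1) + f (j, 1))"
  unfolding KK_def sum.cartesian_product' by simp

context
  fixes T :: real and I :: nat and E p :: "nat \<Rightarrow> real"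
  assumes T_pos: "T > 0"
    and E_pos: "\<forall>j\<in>{1..I}. E j > 0"
    and p_mats: "\<forall>j\<in>{1..I}. \<exists>k::int. p j = 2 * pi * T * of_int k"
    and nondeg: "\<forall>j\<in>{1..I}. \<forall>l\<in>{1..I}. \<forall>\<sigma>\<in>{-1, 1::real}. \<forall>\<sigma>'\<in>{-1, 1::real}.
                   j \<noteq> l \<longrightarrow>
                   \<i> * complex_of_real (uvar p j - uvar p l) + complex_of_real (\<sigma> * E l)
                     + complex_of_real (\<sigma>' * E j) \<noteq> 0"
begin

lemma res:
  assumes l: "l \<in> {1..I}" and s: "s \<in> {-1, 1::real}"
  shows "complex_of_real (\<Prod>j\<in>{1..I}. 2 * E j) * pfc (bb p E) (KK I) (l, s)
         = of_real s * dterm I p (E(l := - s * E l)) l"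
proof -
  define E' where "E' = E(l := - s * E l)"
  define f where "f j = (\<Prod>t\<in>{-1, 1::real}. 1 / (bb p E (l, s) - bb p E (j, t)))" for j
  have El: "E l > 0" using E_pos l by blast
  have set: "KK I - {(l, s)} = insert (l, - s) (({1..I} - {l}) \<times> {-1, 1})"
    using l s by (auto simp: KK_def)
  have pfc: "pfc (bb p E) (KK I) (l, s) = 1 / (bb p E (l, s) - bb p E (l, - s)) * (\<Prod>j\<in>{1..I} - {l}. f j)"
    unfolding pfc_def set f_def
    by (subst prod.insert) (auto simp: prod.cartesian_product')
  have P: "complex_of_real (\<Prod>j\<in>{1..I}. 2 * E j) = of_real (2 * E l) * (\<Prod>j\<in>{1..I} - {l}. of_real (2 * E j))"
    unfolding of_real_prod using l by (subst prod.remove[of _ l]) auto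
  have d1: "bb p E (l, s) - bb p E (l, - s) = of_real (2 * s * E l)"
    by (simp add: bb_def algebra_simps)
  have d2: "of_real (2 * E l) * (1 / of_real (2 * s * E l)) = (of_real s :: complex)"
    using s El by auto
  have fj: "of_real (2 * E j) * f j =
      (\<Sum>\<sigma>\<in>{-1, 1::real}. complex_of_real \<sigma> /
          (\<i> * complex_of_real (uvar p j - uvar p l) - complex_of_real (E' l) - complex_of_real (\<sigma> * E' j)))"
    if j: "j \<in> {1..I} - {l}" for j
  proof -
    define w where "w = \<i> * complex_of_real (uvar p j - uvar p l) + of_real (s * E l)"
    have nz1: "w + of_real (E j) \<noteq> 0"
      using nondeg[rule_format, of j l s 1] j l s by (simp add: w_def)
    have nz2: "w - of_real (E j) \<noteq> 0"
      using nondeg[rule_format, of j l s "-1"] j l s by (simp add: w_def)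
    have bt: "bb p E (l, s) - bb p E (j, t) = w - of_real (t * E j)" for t
      by (simp add: bb_def w_def algebra_simps)
    have e1: "\<i> * complex_of_real (uvar p j - uvar p l) - complex_of_real (E' l) = w"
      by (simp add: E'_def w_def)
    have e2: "E' j = E j" using j by (auto simp: E'_def)
    have g: "of_real (2 * E j) * (1 / (w + of_real (E j)) * (1 / (w - of_real (E j)))) =
        - (1 / (w + of_real (E j))) + 1 / (w - of_real (E j))"
      using nz1 nz2 by (simp add: field_simps)
    show ?thesis unfolding e1 e2 f_def bt using g by simp
  qed
  have "complex_of_real (\<Prod>j\<in>{1..I}. 2 * E j) * pfc (bb p E) (KK I) (l, s)
      = (of_real (2 * E l) * (1 / (bb p E (l, s) - bb p E (l, - s)))) *
        (\<Prod>j\<in>{1..I} - {l}. of_real (2 * E j) * f j)"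
    unfolding P pfc by (simp add: prod.distrib mult_ac)
  also have "(\<Prod>j\<in>{1..I} - {l}. of_real (2 * E j) * f j) = dterm I p E' l"
    unfolding dterm_def by (intro prod.cong refl fj)
  also have "(of_real (2 * E l) * (1 / (bb p E (l, s) - bb p E (l, - s)))) = of_real s"
    unfolding d1 d2 by (rule refl)
  finally show ?thesis unfolding E'_def .
qed

end


definition zz :: "real \<Rightarrow> (nat \<Rightarrow> real) \<Rightarrow> (nat \<Rightarrow> real) \<Rightarrow> nat \<times> real \<Rightarrow> complex" where
  "zz T p E k = \<i> * bb p E k / of_real (2 * pi * T)"

definition Lv :: "real \<Rightarrow> (nat \<Rightarrow> real) \<Rightarrow> (nat \<Rightarrow> real) \<Rightarrow> nat \<times> real \<Rightarrow> complex" where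
  "Lv T p E k = 1 / (\<i> * of_real (2 * pi * T)) * (of_real pi * cot (of_real pi * zz T p E k))"

lemma idiv: "\<i> * X / Y / (2 * \<i>) = X / (2 * Y :: complex)"
  by (cases "Y = 0") (simp_all add: field_simps)

context
  fixes T :: real and I :: nat and E p :: "nat \<Rightarrow> real"
  assumes T_pos: "T > 0"
    and E_pos: "\<forall>j\<in>{1..I}. E j > 0"
    and p_mats: "\<forall>j\<in>{1..I}. \<exists>k::int. p j = 2 * pi * T * of_int k"
    and nondeg: "\<forall>j\<in>{1..I}. \<forall>l\<in>{1..I}. \<forall>\<sigma>\<in>{-1, 1::real}. \<forall>\<sigma>'\<in>{-1, 1::real}.
                   j \<noteq> l \<longrightarrow>
                   \<i> * complex_of_real (uvar p j - uvar p l) + complex_of_real (\<sigma> * E l)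
                     + complex_of_real (\<sigma>' * E j) \<noteq> 0"
begin

lemma hh_summable:
  assumes I1: "I \<ge> 1"
  shows "hh T I p E summable_on UNIV"
proof -
  define B where "B = (\<Prod>j\<in>{2..I}. 1 / (E j)\<^sup>2)"
  define g where "g n = 1 / ((2 * pi * T * of_int n)\<^sup>2 + (E 1)\<^sup>2)" for n :: int
  have set: "{1..I} = insert 1 {2..I}" using I1 by auto
  have u1: "uvar p (Suc 0) = 0" by (simp add: uvar_def)
  have gs: "g summable_on UNIV"
    unfolding g_def using summable_lorentz[of "2 * pi * T" "E 1"] T_pos by (simp add: mult.assoc)
  have "(\<lambda>n. B * g n) summable_on UNIV" by (rule summable_on_cmult_right[OF gs])
  then show ?thesis
  proof (rule summable_on_comparison_test)
    fix n :: int
    have fac_nn: "0 \<le> 1 / ((2 * pi * T * of_int n + uvar p j)\<^sup>2 + (E j)\<^sup>2)" for j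
      by simp
    have "hh T I p E n = g n * (\<Prod>j\<in>{2..I}. 1 / ((2 * pi * T * of_int n + uvar p j)\<^sup>2 + (E j)\<^sup>2))"
      unfolding hh_def set g_def by (subst prod.insert) (auto simp: u1)
    also have "\<dots> \<le> g n * B"
      unfolding B_def
    proof (intro mult_left_mono prod_mono conjI)
      fix j assume j: "j \<in> {2..I}"
      then have "E j > 0" using E_pos by auto
      then show "1 / ((2 * pi * T * of_int n + uvar p j)\<^sup>2 + (E j)\<^sup>2) \<le> 1 / (E j)\<^sup>2"
        by (intro divide_left_mono) (auto intro!: mult_pos_pos add_nonneg_pos)
    qed (auto simp: g_def)
    finally show "hh T I p E n \<le> B * g n" by (simp add: mult.commute)
    show "0 \<le> hh T I p E n" unfolding hh_def by (intro prod_nonneg) auto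
  qed
qed

lemma zz_notint:
  assumes k: "k \<in> KK I"
  shows "zz T p E k \<notin> \<int>"
proof
  assume "zz T p E k \<in> \<int>"
  then have "Im (zz T p E k) = 0" by (simp add: complex_is_Int_iff)
  moreover have "Im (zz T p E k) = snd k * E (fst k) / (2 * pi * T)"
    by (simp add: zz_def bb_def Im_divide_of_real)
  moreover have "E (fst k) > 0" "snd k \<noteq> 0" using k E_pos by (auto simp: KK_def)
  ultimately show False using T_pos by simp
qed

lemma lim_k:
  assumes k: "k \<in> KK I"
  shows "(\<lambda>M. \<Sum>n\<in>{- int M..<int M}. 1 / (xn T n - bb p E k)) \<longlonglongrightarrow> Lv T p E k"
proof -
  define c where "c = 1 / (\<i> * of_real (2 * pi * T))"
  have r0: "complex_of_real (2 * pi * T) \<noteq> 0" using T_pos by simp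
  have eq: "1 / (xn T n - bb p E k) = c * (1 / (zz T p E k + of_int n))" for n
  proof -
    have "xn T n - bb p E k = (\<i> * of_real (2 * pi * T)) * (zz T p E k + of_int n)"
      using r0 by (simp add: xn_def zz_def field_simps)
    then show ?thesis by (simp add: c_def)
  qed
  have "(\<lambda>M. c * (\<Sum>n\<in>{- int M..<int M}. 1 / (zz T p E k + of_int n))) \<longlonglongrightarrow>
        c * (of_real pi * cot (of_real pi * zz T p E k))"
    by (intro tendsto_mult_left cot_lim zz_notint k)
  then show ?thesis unfolding eq sum_distrib_left[symmetric] Lv_def c_def .
qed

lemma Tval:
  assumes j: "j \<in> {1..I}" and s: "s \<in> {-1, 1::real}"
  shows "of_real T * Lv T p E (j, s) = - of_real s * (1/2 + of_real (bose T (E j)))"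
proof -
  have jI: "j \<le> I" using j by auto
  obtain m :: int where m: "uvar p j = 2 * pi * T * of_int m" using uvar_int[OF T_pos E_pos p_mats nondeg jI] by blast
  define w where "w = of_real pi * zz T p E (j, s)"
  have r0: "complex_of_real (2 * pi * T) \<noteq> 0" using T_pos by simp
  have wdef: "w = \<i> * bb p E (j, s) / of_real (2 * T)"
    unfolding w_def zz_def using T_pos by (simp add: field_simps)
  have Ej: "E j > 0" using E_pos j by blast
  have sw: "sin w \<noteq> 0"
  proof
    assume "sin w = 0"
    then obtain n :: int where "w = of_real (of_int n * pi)" by (auto simp: sin_eq_0)
    then have "Im w = 0" by simp
    moreover have "Im w = s * E j / (2 * T)" unfolding wdef by (simp add: bb_def Im_divide_of_real)
    ultimately show False using Ej s T_pos by auto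
  qed
  have e2: "2 * \<i> * w = complex_of_real (- s * E j / T) + \<i> * (of_int m * (of_real pi * 2))"
    unfolding wdef using T_pos by (simp add: bb_def m field_simps)
  define q where "q = exp (- s * E j / T)"
  have q: "exp (2 * \<i> * w) = of_real q"
    unfolding e2 q_def exp_plus_2pin by (simp only: exp_of_real)
  have "of_real T * Lv T p E (j, s) = of_real T / (\<i> * of_real (2 * pi * T)) * of_real pi * cot w"
    unfolding Lv_def w_def by simp
  also have "\<dots> = cot w / (2 * \<i>)" using T_pos by (simp add: field_simps)
  also have "\<dots> = (of_real q + 1) / (2 * (of_real q - 1))"
    unfolding cot_exp[OF sw] q by (rule idiv)
  also have "\<dots> = of_real ((q + 1) / (2 * (q - 1)))" by simp
  also have "(q + 1) / (2 * (q - 1)) = - s * (1/2 + bose T (E j))"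
  proof -
    define Q where "Q = exp (E j / T)"
    have Q1: "Q > 1" unfolding Q_def using Ej T_pos by simp
    have bq: "bose T (E j) = 1 / (Q - 1)" by (simp add: bose_def Q_def)
    show ?thesis
    proof (cases "s = -1")
      case True
      then have "q = Q" by (simp add: q_def Q_def)
      then show ?thesis using True Q1 bq by (simp add: field_simps)
    next
      case False
      then have s1: "s = 1" using s by auto
      then have qQ: "q = 1 / Q" by (simp add: q_def Q_def exp_minus inverse_eq_divide)
      have "Q - 1 \<noteq> 0" "1 - Q \<noteq> 0" "Q \<noteq> 0" using Q1 by auto
      then show ?thesis unfolding qQ bq s1 by (simp add: field_simps)
    qed
  qed
  finally show ?thesis by simp
qed

end


lemma BF_formula:
  fixes c :: "nat \<Rightarrow> complex"
  assumes "distinct xs" "set xs \<subseteq> {1..I}"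
  shows "foldr (\<lambda>j g. bfactor (c j) j \<circ> g) xs id (D0 I p) =
         (\<lambda>E'. D0 I p E' + (\<Sum>j\<in>set xs. c j * onePlusRefl j (D0 I p) E'))"
  using assms
proof (induction xs)
  case Nil then show ?case by simp
next
  case (Cons y ys)
  define G where "G = foldr (\<lambda>j g. bfactor (c j) j \<circ> g) ys id (D0 I p)"
  have IH: "G = (\<lambda>E'. D0 I p E' + (\<Sum>j\<in>set ys. c j * onePlusRefl j (D0 I p) E'))"
    unfolding G_def by (rule Cons.IH) (use Cons.prems in auto)
  have y: "y \<in> {1..I}" "y \<notin> set ys" using Cons.prems by auto
  have zero: "onePlusRefl y (onePlusRefl j (D0 I p)) E' = 0" if jy: "j \<in> set ys" for j E'
  proof -
    have j1: "j \<in> {1..I}" using jy Cons.prems by auto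
    have "y \<noteq> j" using y jy by auto
    then have "onePlusRefl y (onePlusRefl j (D0 I p)) = (\<lambda>_. 0)" using part_pair[OF y(1) j1] by blast
    then show ?thesis by simp
  qed
  have opG: "onePlusRefl y G E' = onePlusRefl y (D0 I p) E'" for E'
  proof -
    have "onePlusRefl y G E' = onePlusRefl y (D0 I p) E' +
        (\<Sum>j\<in>set ys. c j * onePlusRefl y (onePlusRefl j (D0 I p)) E')"
      unfolding IH onePlusRefl_def refl_def by (simp add: sum.distrib algebra_simps)
    also have "(\<Sum>j\<in>set ys. c j * onePlusRefl y (onePlusRefl j (D0 I p)) E') = 0"
      using zero by simp
    finally show ?thesis by simp
  qed
  have "foldr (\<lambda>j g. bfactor (c j) j \<circ> g) (y # ys) id (D0 I p) = bfactor (c y) y G"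
    unfolding G_def by simp
  also have "\<dots> = (\<lambda>E'. D0 I p E' + (\<Sum>j\<in>set (y # ys). c j * onePlusRefl j (D0 I p) E'))"
  proof
    fix E'
    show "bfactor (c y) y G E' = D0 I p E' + (\<Sum>j\<in>set (y # ys). c j * onePlusRefl j (D0 I p) E')"
      unfolding bfactor_def opG using y by (simp add: IH algebra_simps)
  qed
  finally show ?case .
qed

context
  fixes T :: real and I :: nat and E p :: "nat \<Rightarrow> real"
  assumes T_pos: "T > 0"
    and E_pos: "\<forall>j\<in>{1..I}. E j > 0"
    and p_mats: "\<forall>j\<in>{1..I}. \<exists>k::int. p j = 2 * pi * T * of_int k"
    and nondeg: "\<forall>j\<in>{1..I}. \<forall>l\<in>{1..I}. \<forall>\<sigma>\<in>{-1, 1::real}. \<forall>\<sigma>'\<in>{-1, 1::real}.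
                   j \<noteq> l \<longrightarrow>
                   \<i> * complex_of_real (uvar p j - uvar p l) + complex_of_real (\<sigma> * E l)
                     + complex_of_real (\<sigma>' * E j) \<noteq> 0"
begin

lemma Dsum_formula:
  assumes I2: "I \<ge> 2"
  shows "complex_of_real (Dsum I p E T) =
    (\<Sum>k\<in>KK I. ((-1) ^ I * complex_of_real (\<Prod>j\<in>{1..I}. 2 * E j) * pfc (bb p E) (KK I) k) * (of_real T * Lv T p E k))"
proof -
  note ctx = T_pos E_pos p_mats nondeg
  define P where "P = complex_of_real (\<Prod>j\<in>{1..I}. 2 * E j)"
  have hfun: "(\<lambda>n::int. \<Prod>j\<in>{1..I}. 1 / ((2 * pi * T * of_int n + uvar p j)\<^sup>2 + (E j)\<^sup>2)) = hh T I p E"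
    by (rule ext) (simp add: hh_def)
  have Dsum_eq: "Dsum I p E T = (\<Prod>j\<in>{1..I}. 2 * E j) * T * infsum (hh T I p E) UNIV"
    unfolding Dsum_def hfun ..
  have fin: "finite (KK I)" by (simp add: KK_def)
  have ne: "KK I \<noteq> {}" using I2 by (auto simp: KK_def)
  have partial: "complex_of_real (\<Sum>n\<in>N. hh T I p E n) =
      (-1) ^ I * (\<Sum>k\<in>KK I. pfc (bb p E) (KK I) k * (\<Sum>n\<in>N. 1 / (xn T n - bb p E k)))" for N
  proof -
    have "complex_of_real (\<Sum>n\<in>N. hh T I p E n) = (\<Sum>n\<in>N. (-1) ^ I * (\<Sum>k\<in>KK I. pfc (bb p E) (KK I) k / (xn T n - bb p E k)))"
      unfolding of_real_sum
      by (intro sum.cong refl) (simp add: hh_pf[OF ctx] pf_decomp[OF fin ne bb_inj[OF ctx] xn_notin[OF ctx]])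
    also have "\<dots> = (-1) ^ I * (\<Sum>k\<in>KK I. pfc (bb p E) (KK I) k * (\<Sum>n\<in>N. 1 / (xn T n - bb p E k)))"
      by (simp add: sum_distrib_left sum.swap[of _ N] )
    finally show ?thesis .
  qed
  have lim1: "(\<lambda>M. complex_of_real (\<Sum>n\<in>{- int M..<int M}. hh T I p E n)) \<longlonglongrightarrow> complex_of_real (infsum (hh T I p E) UNIV)"
    using I2 by (intro tendsto_of_real infsum_symlim hh_summable[OF ctx]) auto
  have lim2: "(\<lambda>M. complex_of_real (\<Sum>n\<in>{- int M..<int M}. hh T I p E n)) \<longlonglongrightarrow>
      (-1) ^ I * (\<Sum>k\<in>KK I. pfc (bb p E) (KK I) k * Lv T p E k)"
    unfolding partial by (intro tendsto_mult_left tendsto_sum lim_k[OF ctx])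
  have inf: "complex_of_real (infsum (hh T I p E) UNIV) = (-1) ^ I * (\<Sum>k\<in>KK I. pfc (bb p E) (KK I) k * Lv T p E k)"
    using LIMSEQ_unique[OF lim1 lim2] .
  have "complex_of_real (Dsum I p E T) = P * of_real T * ((-1) ^ I * (\<Sum>k\<in>KK I. pfc (bb p E) (KK I) k * Lv T p E k))"
    unfolding Dsum_eq P_def by (simp add: inf)
  also have "\<dots> = (\<Sum>k\<in>KK I. ((-1) ^ I * P * pfc (bb p E) (KK I) k) * (of_real T * Lv T p E k))"
    by (simp add: sum_distrib_left mult_ac)
  finally show ?thesis unfolding P_def .
qed

lemma Dsum_main:
  assumes I2: "I \<ge> 2"
  shows "complex_of_real (Dsum I p E T) =
    D0 I p E + (\<Sum>j\<in>{1..I}. complex_of_real (bose T (E j)) * onePlusRefl j (D0 I p) E)"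
proof -
  note ctx = T_pos E_pos p_mats nondeg
  define P where "P = complex_of_real (\<Prod>j\<in>{1..I}. 2 * E j)"
  define A where "A k = (-1) ^ I * P * pfc (bb p E) (KK I) k" for k
  define a where "a j = A (j, -1)" for j
  define b where "b j = A (j, 1)" for j
  define nn where "nn j = complex_of_real (bose T (E j))" for j
  have Ares: "A (j, s) = (-1) ^ I * (of_real s * dterm I p (E(j := - s * E j)) j)"
    if "j \<in> {1..I}" "s \<in> {-1, 1::real}" for j s
    unfolding A_def P_def using res[OF ctx that] by (simp add: mult.assoc)
  have aj: "a j = (-1) ^ (I + 1) * dterm I p E j" if "j \<in> {1..I}" for j
    unfolding a_def using Ares[OF that, of "-1"] by simp
  have bj: "b j = - ((-1) ^ (I + 1) * dterm I p (E(j := - E j)) j)" if "j \<in> {1..I}" for j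
    unfolding b_def using Ares[OF that, of "1"] by simp
  have card: "card (KK I) \<ge> 2"
  proof -
    have "card (KK I) = I * 2" by (simp add: KK_def card_cartesian_product)
    then show ?thesis using I2 by simp
  qed
  have sz: "(\<Sum>j\<in>{1..I}. a j + b j) = 0"
  proof -
    have "(\<Sum>j\<in>{1..I}. a j + b j) = (\<Sum>k\<in>KK I. A k)" unfolding a_def b_def sum_KK ..
    also have "\<dots> = (-1) ^ I * P * (\<Sum>k\<in>KK I. pfc (bb p E) (KK I) k)"
      unfolding A_def by (simp add: sum_distrib_left)
    also have "(\<Sum>k\<in>KK I. pfc (bb p E) (KK I) k) = 0"
      by (rule pf_sumzero[OF _ card bb_inj[OF ctx]]) (simp add: KK_def)
    finally show ?thesis by simp
  qed
  have "complex_of_real (Dsum I p E T) = (\<Sum>k\<in>KK I. A k * (of_real T * Lv T p E k))"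
    unfolding Dsum_formula[OF I2] A_def P_def ..
  also have "\<dots> = (\<Sum>j\<in>{1..I}. (1/2 + nn j) * (a j - b j))"
    unfolding sum_KK
  proof (intro sum.cong refl)
    fix j assume j: "j \<in> {1..I}"
    show "A (j, -1) * (of_real T * Lv T p E (j, -1)) + A (j, 1) * (of_real T * Lv T p E (j, 1)) =
          (1/2 + nn j) * (a j - b j)"
    proof -
      have t1: "of_real T * Lv T p E (j, -1) = 1/2 + nn j"
        using Tval[OF ctx j, of "-1"] by (simp add: nn_def)
      have t2: "of_real T * Lv T p E (j, 1) = - (1/2 + nn j)"
        using Tval[OF ctx j, of "1"] by (simp add: nn_def)
      show ?thesis unfolding t1 t2 a_def b_def by (simp add: algebra_simps)
    qed
  qed
  also have "\<dots> = (\<Sum>j\<in>{1..I}. a j) + (\<Sum>j\<in>{1..I}. nn j * (a j - b j))"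
    by (rule final_alg[OF sz])
  also have "(\<Sum>j\<in>{1..I}. a j) = D0 I p E"
    unfolding D0_def using aj by (simp add: sum_distrib_left)
  also have "(\<Sum>j\<in>{1..I}. nn j * (a j - b j)) = (\<Sum>j\<in>{1..I}. complex_of_real (bose T (E j)) * onePlusRefl j (D0 I p) E)"
  proof (intro sum.cong refl)
    fix j assume j: "j \<in> {1..I}"
    have "a j - b j = D0 I p E + D0 I p (E(j := - E j))"
      unfolding D0_pair[OF j] aj[OF j] bj[OF j] by (simp add: algebra_simps)
    then show "nn j * (a j - b j) = complex_of_real (bose T (E j)) * onePlusRefl j (D0 I p) E"
      by (simp add: nn_def onePlusRefl_def refl_def)
  qed
  finally show ?thesis .
qed

end

theorem mainTheorem2:
  fixes T :: real and I :: nat and E p :: "nat \<Rightarrow> real"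
  assumes T_pos: "T > 0"
    and I_ge: "I \<ge> 2"
    and E_pos: "\<forall>j\<in>{1..I}. E j > 0"
    and p_matsubara: "\<forall>j\<in>{1..I}. \<exists>k::int. p j = 2 * pi * T * of_int k"
    and nondeg: "\<forall>j\<in>{1..I}. \<forall>l\<in>{1..I}. \<forall>\<sigma>\<in>{-1, 1::real}. \<forall>\<sigma>'\<in>{-1, 1::real}.
                   j \<noteq> l \<longrightarrow>
                   \<i> * complex_of_real (uvar p j - uvar p l) + complex_of_real (\<sigma> * E l)
                     + complex_of_real (\<sigma>' * E j) \<noteq> 0"
  shows "(\<forall>i\<in>{1..I}. \<forall>j\<in>{1..I}. i \<noteq> j \<longrightarrow>
            onePlusRefl i (onePlusRefl j (D0 I p)) E = 0)
       \<and> (\<forall>C. C \<subseteq> {1..I} \<and> card C \<ge> 2 \<longrightarrow> prodOnePlusRefl C (D0 I p) E = 0)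
       \<and> complex_of_real (Dsum I p E T) =
           D0 I p E + (\<Sum>j\<in>{1..I}. complex_of_real (bose T (E j)) * onePlusRefl j (D0 I p) E)
       \<and> complex_of_real (Dsum I p E T) =
           foldr (\<lambda>j g. bfactor (complex_of_real (bose T (E j))) j \<circ> g) [1..<I+1] id (D0 I p) E"
proof -
  note ctx = T_pos E_pos p_matsubara nondeg
  have A: "\<forall>i\<in>{1..I}. \<forall>j\<in>{1..I}. i \<noteq> j \<longrightarrow>
            onePlusRefl i (onePlusRefl j (D0 I p)) E = 0"
  proof (intro ballI impI)
    fix i j assume "i \<in> {1..I}" "j \<in> {1..I}" "i \<noteq> j"
    then have "onePlusRefl i (onePlusRefl j (D0 I p)) = (\<lambda>_. 0)" by (rule part_pair)
    then show "onePlusRefl i (onePlusRefl j (D0 I p)) E = 0" by simp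
  qed
  have B: "\<forall>C. C \<subseteq> {1..I} \<and> card C \<ge> 2 \<longrightarrow> prodOnePlusRefl C (D0 I p) E = 0"
  proof (intro allI impI)
    fix C assume "C \<subseteq> {1..I} \<and> card C \<ge> 2"
    then have "prodOnePlusRefl C (D0 I p) = (\<lambda>_. 0)" by (intro part_C) auto
    then show "prodOnePlusRefl C (D0 I p) E = 0" by simp
  qed
  have C: "complex_of_real (Dsum I p E T) =
           D0 I p E + (\<Sum>j\<in>{1..I}. complex_of_real (bose T (E j)) * onePlusRefl j (D0 I p) E)"
    by (rule Dsum_main[OF ctx I_ge])
  have "foldr (\<lambda>j g. bfactor (complex_of_real (bose T (E j))) j \<circ> g) [1..<I+1] id (D0 I p) =
        (\<lambda>E'. D0 I p E' + (\<Sum>j\<in>set [1..<I+1]. complex_of_real (bose T (E j)) * onePlusRefl j (D0 I p) E'))"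
    by (rule BF_formula) auto
  moreover have "set [1..<I+1] = {1..I}" by auto
  ultimately have D: "foldr (\<lambda>j g. bfactor (complex_of_real (bose T (E j))) j \<circ> g) [1..<I+1] id (D0 I p) E =
        D0 I p E + (\<Sum>j\<in>{1..I}. complex_of_real (bose T (E j)) * onePlusRefl j (D0 I p) E)"
    by simp
  show ?thesis using A B C D by simp
qed

end
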